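(* Let $S\ni h$ be a polarized lattice, $\Delta$ a Weyl chamber for $\operatorname{rt}(S,h)$, $e_1,e_2\in\mathfrak{b}(\Delta)$ distinct exceptional divisors, and $l_1,l_2\in\operatorname{Fn}_\Delta(S,h)$ distinct lines. Then: (1) if $S\ni h$ is $2$-admissible, then $l_1\cdot l_2\in\{0,1\}$; (2) if $S\ni h$ is $1$-admissible, then $l_1\cdot e_1\in\{0,1\}$; (3) always $e_1\cdot e_2\in\{0,1\}$.
   Context: All lattices even; $(S,h)$ polarized means $S$ hyperbolic, $h^2>0$. $\operatorname{root}_n(S,h)=\{r: r^2=-2,\ r\cdot h=n\}$; $\operatorname{rt}(S,h)$ is spanned by $\operatorname{root}_0(S,h)$. A Weyl chamber $\Delta$ has positive roots $P_\Delta$ and simple roots $\mathfrak{b}(\Delta)$ (exceptional divisors). Lines: $\operatorname{Fn}_\Delta(S,h)=\{l\in\operatorname{root}_1(S,h): l\cdot e\ge0\ \forall e\in\mathfrak{b}(\Delta)\}$. A vector $w$ is $m$-isotropic if $w^2=0$, $w\cdot h=m$. $S\ni h$ is $1$-admissible if it has no $1$-isotropic vector, and $2$-admissible if $h^2\ge4$ and it has neither $1$- nor $2$-isotropic vectors. *)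

theory Defs
  imports "HOL-Analysis.Analysis"
begin

text \<open>A lattice of rank CARD('n) is modelled as int^'n with an integer Gram matrix G.\<close>

definition bf :: "int^'n^'n \<Rightarrow> int^'n \<Rightarrow> int^'n \<Rightarrow> int" where
  "bf G x y = (\<Sum>i\<in>UNIV. \<Sum>j\<in>UNIV. x$i * G$i$j * y$j)"

definition rbf :: "int^'n^'n \<Rightarrow> real^'n \<Rightarrow> real^'n \<Rightarrow> real" where
  "rbf G x y = (\<Sum>i\<in>UNIV. \<Sum>j\<in>UNIV. x$i * of_int (G$i$j) * y$j)"

definition to_real :: "int^'n \<Rightarrow> real^'n" where
  "to_real x = (\<chi> i. of_int (x$i))"

definition even_lattice :: "int^'n^'n \<Rightarrow> bool" where
  "even_lattice G \<longleftrightarrow> (\<forall>i j. G$i$j = G$j$i) \<and> (\<forall>i. even (G$i$i)) \<and> det G \<noteq> 0"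

text \<open>Hyperbolic: nondegenerate of signature (1, rank-1): there is a positive vector,
  but no 2-dimensional real subspace on which the form is positive definite.\<close>
definition hyperbolic :: "int^'n^'n \<Rightarrow> bool" where
  "hyperbolic G \<longleftrightarrow> det G \<noteq> 0 \<and> (\<exists>x. rbf G x x > 0) \<and>
     \<not> (\<exists>x y. \<forall>a b::real. (a \<noteq> 0 \<or> b \<noteq> 0) \<longrightarrow>
          rbf G (a *\<^sub>R x + b *\<^sub>R y) (a *\<^sub>R x + b *\<^sub>R y) > 0)"

definition polarized :: "int^'n^'n \<Rightarrow> int^'n \<Rightarrow> bool" where
  "polarized G h \<longleftrightarrow> even_lattice G \<and> hyperbolic G \<and> bf G h h > 0"

definition root :: "int^'n^'n \<Rightarrow> int^'n \<Rightarrow> int \<Rightarrow> (int^'n) set" where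
  "root G h n = {r. bf G r r = -2 \<and> bf G r h = n}"

text \<open>Weyl chamber of the root system rt(S,h) (spanned by root_0), as an open chamber in
  rt(S,h) \<otimes> R: the set of vectors of the span having prescribed nonzero signs against all roots,
  the signs coming from a generic vector.\<close>
definition weyl_chamber :: "int^'n^'n \<Rightarrow> int^'n \<Rightarrow> (real^'n) set \<Rightarrow> bool" where
  "weyl_chamber G h \<Delta> \<longleftrightarrow> (\<exists>v \<in> span (to_real ` root G h 0).
      (\<forall>r\<in>root G h 0. rbf G v (to_real r) \<noteq> 0) \<and>
      \<Delta> = {x \<in> span (to_real ` root G h 0).
              \<forall>r\<in>root G h 0. rbf G x (to_real r) * rbf G v (to_real r) > 0})"

definition pos_roots :: "int^'n^'n \<Rightarrow> int^'n \<Rightarrow> (real^'n) set \<Rightarrow> (int^'n) set" where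
  "pos_roots G h \<Delta> = {r \<in> root G h 0. \<forall>x\<in>\<Delta>. rbf G x (to_real r) > 0}"

text \<open>Simple roots (exceptional divisors): positive roots not a sum of two positive roots.\<close>
definition simple_roots :: "int^'n^'n \<Rightarrow> int^'n \<Rightarrow> (real^'n) set \<Rightarrow> (int^'n) set" where
  "simple_roots G h \<Delta> = {e \<in> pos_roots G h \<Delta>.
      \<not> (\<exists>a\<in>pos_roots G h \<Delta>. \<exists>b\<in>pos_roots G h \<Delta>. e = a + b)}"

definition lines :: "int^'n^'n \<Rightarrow> int^'n \<Rightarrow> (real^'n) set \<Rightarrow> (int^'n) set" where
  "lines G h \<Delta> = {l \<in> root G h 1. \<forall>e\<in>simple_roots G h \<Delta>. bf G l e \<ge> 0}"

definition isotropic :: "int^'n^'n \<Rightarrow> int^'n \<Rightarrow> int \<Rightarrow> int^'n \<Rightarrow> bool" where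
  "isotropic G h m w \<longleftrightarrow> bf G w w = 0 \<and> bf G w h = m"

definition admissible1 :: "int^'n^'n \<Rightarrow> int^'n \<Rightarrow> bool" where
  "admissible1 G h \<longleftrightarrow> \<not> (\<exists>w. isotropic G h 1 w)"

definition admissible2 :: "int^'n^'n \<Rightarrow> int^'n \<Rightarrow> bool" where
  "admissible2 G h \<longleftrightarrow> bf G h h \<ge> 4 \<and> \<not> (\<exists>w. isotropic G h 1 w) \<and> \<not> (\<exists>w. isotropic G h 2 w)"

end

theory Submission imports Defs begin

definition RM :: "int^'n^'n \<Rightarrow> real^'n^'n" where
  "RM G = (\<chi> i j. real_of_int (G$i$j))"

lemma rbf_add_left: "rbf G (x + y) z = rbf G x z + rbf G y z"
  unfolding rbf_def by (simp add: sum.distrib algebra_simps)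
lemma rbf_add_right: "rbf G z (x + y) = rbf G z x + rbf G z y"
  unfolding rbf_def by (simp add: sum.distrib algebra_simps)
lemma rbf_scale_left: "rbf G (c *\<^sub>R x) z = c * rbf G x z"
  unfolding rbf_def by (simp add: sum_distrib_left algebra_simps)
lemma rbf_scale_right: "rbf G z (c *\<^sub>R x) = c * rbf G z x"
  unfolding rbf_def by (simp add: sum_distrib_left algebra_simps)
lemma rbf_minus_left: "rbf G (- x) z = - rbf G x z"
  unfolding rbf_def by (simp add: sum_negf)
lemma rbf_minus_right: "rbf G z (- x) = - rbf G z x"
  unfolding rbf_def by (simp add: sum_negf)
lemma rbf_diff_left: "rbf G (x - y) z = rbf G x z - rbf G y z"
  unfolding rbf_def by (simp add: sum_subtractf algebra_simps)
lemma rbf_diff_right: "rbf G z (x - y) = rbf G z x - rbf G z y"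
  unfolding rbf_def by (simp add: sum_subtractf algebra_simps)
lemma rbf_zero_left[simp]: "rbf G 0 z = 0"
  unfolding rbf_def by simp
lemma rbf_sym: "\<forall>i j. G$i$j = G$j$i \<Longrightarrow> rbf G x y = rbf G y x"
  unfolding rbf_def by (subst sum.swap) (simp add: algebra_simps)

lemma bf_rbf: "real_of_int (bf G x y) = rbf G (to_real x) (to_real y)"
  unfolding rbf_def bf_def to_real_def by simp

lemma to_real_add: "to_real (x + y) = to_real x + to_real y"
  unfolding to_real_def by (simp add: vec_eq_iff)
lemma to_real_diff: "to_real (x - y) = to_real x - to_real y"
  unfolding to_real_def by (simp add: vec_eq_iff)
lemma to_real_minus: "to_real (- x) = - to_real x"
  unfolding to_real_def by (simp add: vec_eq_iff)
lemma to_real_eq0: "to_real x = 0 \<longleftrightarrow> x = 0"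
  unfolding to_real_def by (simp add: vec_eq_iff)

lemma bf_add_left: "bf G (x + y) z = bf G x z + bf G y z"
  unfolding bf_def by (simp add: sum.distrib algebra_simps)
lemma bf_add_right: "bf G z (x + y) = bf G z x + bf G z y"
  unfolding bf_def by (simp add: sum.distrib algebra_simps)
lemma bf_diff_left: "bf G (x - y) z = bf G x z - bf G y z"
  unfolding bf_def by (simp add: sum_subtractf algebra_simps)
lemma bf_diff_right: "bf G z (x - y) = bf G z x - bf G z y"
  unfolding bf_def by (simp add: sum_subtractf algebra_simps)
lemma bf_minus_left: "bf G (- x) z = - bf G x z"
  unfolding bf_def by (simp add: sum_negf)
lemma bf_minus_right: "bf G z (- x) = - bf G z x"
  unfolding bf_def by (simp add: sum_negf)
lemma bf_sym: "\<forall>i j. G$i$j = G$j$i \<Longrightarrow> bf G x y = bf G y x"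
  unfolding bf_def by (subst sum.swap) (simp add: algebra_simps)

lemma det_RM: "det (RM G) = real_of_int (det G)"
  unfolding det_def RM_def by (simp add: of_int_sum of_int_prod)

lemma rbf_inner: "rbf G y x = y \<bullet> (RM G *v x)"
  unfolding rbf_def RM_def inner_vec_def matrix_vector_mult_def
  by (simp add: sum_distrib_left algebra_simps)

lemma nondeg:
  assumes "det G \<noteq> 0" "x \<noteq> 0"
  shows "\<exists>y. rbf G y x \<noteq> 0"
proof -
  have "invertible (RM G)" using assms by (simp add: invertible_det_nz det_RM)
  then obtain B where "B ** RM G = mat 1" unfolding invertible_def by blast
  then have "RM G *v x \<noteq> 0" using assms(2) matrix_left_invertible_ker by blast
  then have "rbf G (RM G *v x) x \<noteq> 0" unfolding rbf_inner by simp
  then show ?thesis by blast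
qed

lemma rbf_quad: "rbf G (a *\<^sub>R x + b *\<^sub>R y) (a *\<^sub>R x + b *\<^sub>R y)
   = a*a*rbf G x x + a*b*rbf G x y + b*a*rbf G y x + b*b*rbf G y y"
  by (simp add: rbf_add_left rbf_add_right rbf_scale_left rbf_scale_right algebra_simps)

lemma no_pos_perp:
  assumes sym: "\<forall>i j. G$i$j = G$j$i" and hyp: "hyperbolic G" and HH: "rbf G H H > 0"
    and wH: "rbf G w H = 0" and ww: "rbf G w w > 0"
  shows False
proof -
  have Hw: "rbf G H w = 0" using wH rbf_sym[OF sym] by metis
  have "\<forall>a b::real. (a \<noteq> 0 \<or> b \<noteq> 0) \<longrightarrow>
          rbf G (a *\<^sub>R H + b *\<^sub>R w) (a *\<^sub>R H + b *\<^sub>R w) > 0"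
  proof (intro allI impI)
    fix a b :: real assume ab: "a \<noteq> 0 \<or> b \<noteq> 0"
    have e: "rbf G (a *\<^sub>R H + b *\<^sub>R w) (a *\<^sub>R H + b *\<^sub>R w) = a*a*rbf G H H + b*b*rbf G w w"
      unfolding rbf_quad using wH Hw by simp
    have "a*a*rbf G H H \<ge> 0" "b*b*rbf G w w \<ge> 0" using HH ww by auto
    moreover have "a*a*rbf G H H > 0 \<or> b*b*rbf G w w > 0"
      using ab HH ww by (metis mult_pos_pos not_real_square_gt_zero)
    ultimately show "rbf G (a *\<^sub>R H + b *\<^sub>R w) (a *\<^sub>R H + b *\<^sub>R w) > 0" unfolding e by linarith
  qed
  then show False using hyp unfolding hyperbolic_def by blast
qed

lemma quad_pos:
  fixes a b :: real assumes "a \<noteq> 0"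
  shows "2 * (a / (\<bar>b\<bar> + 1)) * a + (a / (\<bar>b\<bar> + 1))^2 * b > 0"
proof -
  define k where "k = \<bar>b\<bar> + 1"
  have k: "k > 0" unfolding k_def by simp
  have "a * a > 0" using assms by (metis not_real_square_gt_zero)
  then have ta: "(a/k) * a > 0" using k by simp
  have bk: "b / k > -1" using k unfolding k_def by (simp add: field_simps)
  have "2 * (a / k) * a + (a / k)^2 * b = ((a/k) * a) * (2 + b/k)"
    using k by (simp add: power2_eq_square field_simps)
  also have "\<dots> > 0" by (rule mult_pos_pos[OF ta]) (use bk in linarith)
  finally show ?thesis unfolding k_def .
qed

lemma negdef:
  assumes sym: "\<forall>i j. G$i$j = G$j$i" and hyp: "hyperbolic G" and HH: "rbf G H H > 0"
    and xH: "rbf G x H = 0" and x0: "x \<noteq> 0"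
  shows "rbf G x x < 0"
proof (rule ccontr)
  assume "\<not> rbf G x x < 0"
  then have xx: "rbf G x x \<ge> 0" by simp
  have dG: "det G \<noteq> 0" using hyp unfolding hyperbolic_def by simp
  show False
  proof (cases "rbf G x x > 0")
    case True then show False using no_pos_perp[OF sym hyp HH xH] by blast
  next
    case False
    then have xx0: "rbf G x x = 0" using xx by simp
    obtain y where y: "rbf G y x \<noteq> 0" using nondeg[OF dG x0] by blast
    define c where "c = rbf G y H / rbf G H H"
    define y' where "y' = y - c *\<^sub>R H"
    have y'H: "rbf G y' H = 0" unfolding y'_def c_def using HH
      by (simp add: rbf_diff_left rbf_scale_left)
    have Hx: "rbf G H x = 0" using xH rbf_sym[OF sym] by metis
    define a where "a = rbf G x y'"
    have a: "a \<noteq> 0" unfolding a_def y'_def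
      using y Hx xH by (simp add: rbf_diff_right rbf_scale_right rbf_sym[OF sym, of x y])
    define b where "b = rbf G y' y'"
    define t where "t = a / (\<bar>b\<bar> + 1)"
    define w where "w = 1 *\<^sub>R x + t *\<^sub>R y'"
    have wH: "rbf G w H = 0" unfolding w_def using xH y'H
      by (simp add: rbf_add_left rbf_scale_left)
    have "rbf G w w = 2 * t * a + t^2 * b"
      unfolding w_def rbf_quad a_def b_def using xx0 rbf_sym[OF sym, of y' x]
      by (simp add: power2_eq_square algebra_simps)
    also have "\<dots> > 0" unfolding t_def by (rule quad_pos[OF a])
    finally show False using no_pos_perp[OF sym hyp HH wH] by blast
  qed
qed

lemma hodge:
  assumes sym: "\<forall>i j. G$i$j = G$j$i" and hyp: "hyperbolic G" and HH: "rbf G H H > 0"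
  shows "rbf G H H * rbf G x x \<le> (rbf G x H)^2"
proof -
  define u where "u = rbf G H H *\<^sub>R x + (- rbf G x H) *\<^sub>R H"
  have uH: "rbf G u H = 0" unfolding u_def by (simp add: rbf_add_left rbf_diff_left rbf_scale_left)
  have uu: "rbf G u u \<le> 0"
    using negdef[OF sym hyp HH uH] by (cases "u = 0") auto
  have "rbf G u u = rbf G H H * (rbf G H H * rbf G x x - (rbf G x H)^2)"
    unfolding u_def rbf_quad using rbf_sym[OF sym, of H x]
    by (simp add: power2_eq_square algebra_simps)
  then have "rbf G H H * (rbf G H H * rbf G x x - (rbf G x H)^2) \<le> 0" using uu by simp
  then show ?thesis using HH by (simp add: mult_le_0_iff)
qed

lemma polar_facts:
  assumes "polarized G h"
  shows "\<forall>i j. G$i$j = G$j$i" "hyperbolic G" "rbf G (to_real h) (to_real h) > 0"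
    "bf G h h > 0" "det G \<noteq> 0"
  using assms unfolding polarized_def even_lattice_def hyperbolic_def
  by (auto simp flip: bf_rbf)

lemma negdef_int:
  assumes P: "polarized G h" and "bf G x h = 0" and "x \<noteq> 0"
  shows "bf G x x < 0"
proof -
  note f = polar_facts[OF P]
  have "rbf G (to_real x) (to_real h) = 0" using assms(2) bf_rbf[of G x h] by simp
  moreover have "to_real x \<noteq> 0" using assms(3) to_real_eq0 by blast
  ultimately have "rbf G (to_real x) (to_real x) < 0" using negdef[OF f(1) f(2) f(3)] by blast
  then show ?thesis using bf_rbf[of G x x] by simp
qed

lemma hodge_int:
  assumes P: "polarized G h"
  shows "bf G h h * bf G x x \<le> (bf G x h)^2"
proof -
  note f = polar_facts[OF P]
  have "rbf G (to_real h) (to_real h) * rbf G (to_real x) (to_real x) \<le> (rbf G (to_real x) (to_real h))^2"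
    by (rule hodge[OF f(1) f(2) f(3)])
  then have "real_of_int (bf G h h * bf G x x) \<le> real_of_int ((bf G x h)^2)"
    by (simp add: bf_rbf)
  then show ?thesis by linarith
qed

lemma finite_box: "finite {x :: int^'n. \<forall>i. \<bar>x$i\<bar> \<le> N}"
proof -
  have "{x :: int^'n. \<forall>i. \<bar>x$i\<bar> \<le> N} \<subseteq> vec_lambda ` (PiE UNIV (\<lambda>i. {-N..N}))"
  proof
    fix x :: "int^'n" assume "x \<in> {x. \<forall>i. \<bar>x$i\<bar> \<le> N}"
    then have b: "\<bar>x$i\<bar> \<le> N" for i by simp
    have "-N \<le> x$i \<and> x$i \<le> N" for i using b[of i] by arith
    then have "(\<lambda>i. x$i) \<in> PiE UNIV (\<lambda>i. {-N..N})" by auto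
    moreover have "x = vec_lambda (\<lambda>i. x$i)" by simp
    ultimately show "x \<in> vec_lambda ` (PiE UNIV (\<lambda>i. {-N..N}))" by blast
  qed
  moreover have "finite (vec_lambda ` (PiE UNIV (\<lambda>i. {-N..N})) :: (int^'n) set)"
    by (intro finite_imageI finite_PiE) auto
  ultimately show ?thesis by (rule finite_subset)
qed

lemma finite_root0:
  fixes G :: "int^'n^'n"
  assumes P: "polarized G h"
  shows "finite (root G h 0)"
proof -
  note f = polar_facts[OF P]
  define H where "H = to_real h"
  have HH: "rbf G H H > 0" using f(3) unfolding H_def .
  define Q where "Q = (\<lambda>x. 2 * (rbf G x H)^2 / rbf G H H - rbf G x x)"
  have Qpos: "Q x > 0" if "x \<noteq> 0" for x
  proof -
    have ho: "rbf G H H * rbf G x x \<le> (rbf G x H)^2" by (rule hodge[OF f(1) f(2) HH])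
    then have "rbf G x x \<le> (rbf G x H)^2 / rbf G H H" using HH by (simp add: field_simps)
    show ?thesis
    proof (cases "rbf G x H = 0")
      case True
      then show ?thesis using negdef[OF f(1) f(2) HH True that] unfolding Q_def by simp
    next
      case False
      then have "(rbf G x H)^2 / rbf G H H > 0" using HH by simp
      then show ?thesis using \<open>rbf G x x \<le> _\<close> unfolding Q_def by simp
    qed
  qed
  have Qhom: "Q (c *\<^sub>R x) = c^2 * Q x" for c x
    unfolding Q_def by (simp add: rbf_scale_left rbf_scale_right power2_eq_square field_simps)
  have contQ: "continuous_on UNIV Q"
  proof -
    have c1: "continuous_on UNIV (\<lambda>x. rbf G x H)" unfolding rbf_def by (intro continuous_intros)
    have c2: "continuous_on UNIV (\<lambda>x. rbf G x x)" unfolding rbf_def by (intro continuous_intros)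
    have "rbf G H H \<noteq> 0" using HH by simp
    then show ?thesis unfolding Q_def
      by (intro continuous_on_diff continuous_on_divide continuous_on_mult continuous_on_const
          continuous_on_power c1 c2) simp
  qed
  obtain x0 where x0: "x0 \<in> sphere (0::real^'n) 1" and x0min: "\<forall>y\<in>sphere 0 1. Q x0 \<le> Q y"
  proof -
    have ne: "sphere (0::real^'n) 1 \<noteq> {}" by simp
    show ?thesis using continuous_attains_inf[OF compact_sphere ne continuous_on_subset[OF contQ subset_UNIV]] that by blast
  qed
  define c where "c = Q x0"
  have "x0 \<noteq> 0" using x0 by auto
  then have c: "c > 0" unfolding c_def using Qpos by blast
  have Qlow: "Q x \<ge> c * (norm x)^2" for x
  proof (cases "x = 0")
    case True then show ?thesis unfolding Q_def by simp
  next
    case False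
    have "(1 / norm x) *\<^sub>R x \<in> sphere 0 1" using False by (simp add: norm_scaleR)
    then have "c \<le> Q ((1 / norm x) *\<^sub>R x)" using x0min unfolding c_def by blast
    also have "\<dots> = Q x / (norm x)^2" unfolding Qhom by (simp add: power2_eq_square field_simps)
    finally show ?thesis using False by (simp add: field_simps)
  qed
  define N where "N = \<lceil>sqrt (2 / c)\<rceil>"
  have "root G h 0 \<subseteq> {x :: int^'n. \<forall>i. \<bar>x$i\<bar> \<le> N}"
  proof
    fix r assume r: "r \<in> root G h 0"
    then have "Q (to_real r) = 2" unfolding Q_def H_def root_def using bf_rbf[of G r h] bf_rbf[of G r r]
      by simp
    then have "c * (norm (to_real r))^2 \<le> 2" using Qlow by metis
    then have "(norm (to_real r))^2 \<le> 2 / c" using c by (simp add: field_simps)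
    then have nr: "norm (to_real r) \<le> sqrt (2 / c)" using real_le_rsqrt by blast
    show "r \<in> {x :: int^'n. \<forall>i. \<bar>x$i\<bar> \<le> N}"
    proof (clarify)
      fix i
      have "\<bar>to_real r $ i\<bar> \<le> norm (to_real r)" by (rule component_le_norm_cart)
      then have "\<bar>real_of_int (r$i)\<bar> \<le> sqrt (2/c)" using nr unfolding to_real_def by simp
      then show "\<bar>r$i\<bar> \<le> N" unfolding N_def by linarith
    qed
  qed
  then show ?thesis using finite_box finite_subset by blast
qed

lemma root_neg: "r \<in> root G h 0 \<Longrightarrow> - r \<in> root G h 0"
  unfolding root_def by (simp add: bf_minus_left bf_minus_right)

lemma wc_v:
  assumes "weyl_chamber G h \<Delta>"
  obtains v where "v \<in> \<Delta>" "\<And>r. r \<in> root G h 0 \<Longrightarrow> rbf G v (to_real r) \<noteq> 0"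
proof -
  obtain v where v: "v \<in> span (to_real ` root G h 0)" "\<forall>r\<in>root G h 0. rbf G v (to_real r) \<noteq> 0"
    "\<Delta> = {x \<in> span (to_real ` root G h 0).
              \<forall>r\<in>root G h 0. rbf G x (to_real r) * rbf G v (to_real r) > 0}"
    using assms unfolding weyl_chamber_def by blast
  have "v \<in> \<Delta>" using v by (auto simp: zero_less_mult_iff)
  then show ?thesis using that v by blast
qed

lemma pos_or_neg:
  assumes W: "weyl_chamber G h \<Delta>" and r: "r \<in> root G h 0"
  shows "r \<in> pos_roots G h \<Delta> \<or> - r \<in> pos_roots G h \<Delta>"
proof -
  obtain v where v: "v \<in> span (to_real ` root G h 0)" "\<forall>r\<in>root G h 0. rbf G v (to_real r) \<noteq> 0"
    "\<Delta> = {x \<in> span (to_real ` root G h 0).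
              \<forall>r\<in>root G h 0. rbf G x (to_real r) * rbf G v (to_real r) > 0}"
    using W unfolding weyl_chamber_def by blast
  have "rbf G v (to_real r) > 0 \<or> rbf G v (to_real r) < 0" using v(2) r by auto
  then show ?thesis
  proof
    assume p: "rbf G v (to_real r) > 0"
    have "\<forall>x\<in>\<Delta>. rbf G x (to_real r) > 0"
      using v(3) r p by (auto simp: zero_less_mult_iff)
    then show ?thesis using r unfolding pos_roots_def by blast
  next
    assume p: "rbf G v (to_real r) < 0"
    have "\<forall>x\<in>\<Delta>. rbf G x (to_real r) < 0"
      using v(3) r p by (auto simp: zero_less_mult_iff)
    then have "\<forall>x\<in>\<Delta>. rbf G x (to_real (- r)) > 0"
      by (simp add: to_real_minus rbf_minus_right)
    then show ?thesis using root_neg[OF r] unfolding pos_roots_def by blast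
  qed
qed

lemma not_both:
  assumes W: "weyl_chamber G h \<Delta>" and r: "r \<in> pos_roots G h \<Delta>" "- r \<in> pos_roots G h \<Delta>"
  shows False
proof -
  obtain v where v: "v \<in> \<Delta>" using wc_v[OF W] by blast
  have "rbf G v (to_real r) > 0" "rbf G v (to_real (- r)) > 0" using r v unfolding pos_roots_def by auto
  then show False by (simp add: to_real_minus rbf_minus_right)
qed

lemma lines_pos:
  fixes G :: "int^'n^'n"
  assumes P: "polarized G h" and W: "weyl_chamber G h \<Delta>" and l: "l \<in> lines G h \<Delta>"
    and r: "r \<in> pos_roots G h \<Delta>"
  shows "bf G l r \<ge> 0"
proof (rule ccontr)
  assume neg: "\<not> bf G l r \<ge> 0"
  obtain v where v: "v \<in> \<Delta>" using wc_v[OF W] by blast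
  define f where "f = (\<lambda>s. rbf G v (to_real s))"
  have fpos: "f s > 0" if "s \<in> pos_roots G h \<Delta>" for s using that v unfolding f_def pos_roots_def by auto
  define A where "A = {s \<in> pos_roots G h \<Delta>. bf G l s < 0}"
  have finA: "finite A" unfolding A_def pos_roots_def
    using finite_root0[OF P] by (rule rev_finite_subset) auto
  have rA: "r \<in> A" unfolding A_def using r neg by simp
  then have ne: "f ` A \<noteq> {}" by blast
  have "Min (f ` A) \<in> f ` A" using finA ne by (intro Min_in) auto
  then obtain r0 where r0: "r0 \<in> A" "f r0 = Min (f ` A)" by auto
  have minr: "f r0 \<le> f s" if "s \<in> A" for s using r0(2) finA that by simp
  have "r0 \<notin> simple_roots G h \<Delta>"
  proof
    assume "r0 \<in> simple_roots G h \<Delta>"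
    then have "bf G l r0 \<ge> 0" using l unfolding lines_def by blast
    then show False using r0(1) unfolding A_def by simp
  qed
  then obtain a b where ab: "a \<in> pos_roots G h \<Delta>" "b \<in> pos_roots G h \<Delta>" "r0 = a + b"
    using r0(1) unfolding A_def simple_roots_def by blast
  have fab: "f r0 = f a + f b" unfolding f_def ab(3) by (simp add: to_real_add rbf_add_right)
  have "bf G l r0 = bf G l a + bf G l b" unfolding ab(3) by (simp add: bf_add_right)
  then have "bf G l a < 0 \<or> bf G l b < 0" using r0(1) unfolding A_def by auto
  then show False
  proof
    assume "bf G l a < 0"
    then have "a \<in> A" using ab unfolding A_def by simp
    then show False using minr fab fpos[OF ab(2)] by fastforce
  next
    assume "bf G l b < 0"
    then have "b \<in> A" using ab unfolding A_def by simp
    then show False using minr fab fpos[OF ab(1)] by fastforce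
  qed
qed

theorem lemma2p12:
  fixes G :: "int^'n^'n" and h e1 e2 l1 l2 :: "int^'n" and \<Delta> :: "(real^'n) set"
  assumes "polarized G h"
    and "weyl_chamber G h \<Delta>"
    and "e1 \<in> simple_roots G h \<Delta>" and "e2 \<in> simple_roots G h \<Delta>" and "e1 \<noteq> e2"
    and "l1 \<in> lines G h \<Delta>" and "l2 \<in> lines G h \<Delta>" and "l1 \<noteq> l2"
  shows "(admissible2 G h \<longrightarrow> bf G l1 l2 \<in> {0, 1})
       \<and> (admissible1 G h \<longrightarrow> bf G l1 e1 \<in> {0, 1})
       \<and> bf G e1 e2 \<in> {0, 1}"
proof -
  note P = assms(1) and W = assms(2)
  note f = polar_facts[OF P]
  have sym: "bf G x y = bf G y x" for x y using bf_sym[OF f(1)] by blast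
  have e1: "e1 \<in> pos_roots G h \<Delta>" "bf G e1 e1 = -2" "bf G e1 h = 0"
    using assms(3) unfolding simple_roots_def pos_roots_def root_def by auto
  have e2: "e2 \<in> pos_roots G h \<Delta>" "bf G e2 e2 = -2" "bf G e2 h = 0"
    using assms(4) unfolding simple_roots_def pos_roots_def root_def by auto
  have l1: "bf G l1 l1 = -2" "bf G l1 h = 1" "\<forall>e\<in>simple_roots G h \<Delta>. bf G l1 e \<ge> 0"
    using assms(6) unfolding lines_def root_def by auto
  have l2: "bf G l2 l2 = -2" "bf G l2 h = 1" "\<forall>e\<in>simple_roots G h \<Delta>. bf G l2 e \<ge> 0"
    using assms(7) unfolding lines_def root_def by auto
  have hh: "bf G h h \<ge> 1" using f(4) by simp
  have sq: "bf G (x + y) (x + y) = bf G x x + 2 * bf G x y + bf G y y" for x y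
    by (simp add: bf_add_left bf_add_right sym[of y x])
  have sqd: "bf G (x - y) (x - y) = bf G x x - 2 * bf G x y + bf G y y" for x y
    by (simp add: bf_diff_left bf_diff_right sym[of y x])
  have part3: "bf G e1 e2 \<in> {0, 1}"
  proof -
    define x where "x = bf G e1 e2"
    have d0: "e1 - e2 \<noteq> 0" using assms(5) by simp
    have "bf G (e1 - e2) h = 0" using e1 e2 by (simp add: bf_diff_left)
    then have "bf G (e1 - e2) (e1 - e2) < 0" using negdef_int[OF P] d0 by blast
    then have lo: "x > -2" unfolding x_def sqd using e1 e2 by simp
    have s0: "e1 + e2 \<noteq> 0"
    proof
      assume "e1 + e2 = 0"
      then have "e2 = - e1" by (simp add: eq_neg_iff_add_eq_0 add.commute)
      then show False using not_both[OF W e1(1)] e2(1) by simp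
    qed
    have "bf G (e1 + e2) h = 0" using e1 e2 by (simp add: bf_add_left)
    then have "bf G (e1 + e2) (e1 + e2) < 0" using negdef_int[OF P] s0 by blast
    then have hi: "x < 2" unfolding x_def sq using e1 e2 by simp
    have "x \<noteq> -1"
    proof
      assume x1: "x = -1"
      define d where "d = e1 - e2"
      have "d \<in> root G h 0" unfolding root_def d_def using x1 e1 e2
        by (simp add: x_def bf_diff_left bf_diff_right sym[of e2 e1])
      then have "d \<in> pos_roots G h \<Delta> \<or> - d \<in> pos_roots G h \<Delta>" by (rule pos_or_neg[OF W])
      then show False
      proof
        assume "d \<in> pos_roots G h \<Delta>"
        moreover have "e1 = d + e2" unfolding d_def by simp
        ultimately show False using assms(3) e2(1) unfolding simple_roots_def by blast
      next
        assume "- d \<in> pos_roots G h \<Delta>"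
        moreover have "e2 = - d + e1" unfolding d_def by simp
        ultimately show False using assms(4) e1(1) unfolding simple_roots_def by blast
      qed
    qed
    then have "x = 0 \<or> x = 1" using lo hi by linarith
    then show ?thesis unfolding x_def by auto
  qed
  have part2: "admissible1 G h \<longrightarrow> bf G l1 e1 \<in> {0, 1}"
  proof
    assume A: "admissible1 G h"
    define x where "x = bf G l1 e1"
    have x0: "x \<ge> 0" using l1(3) assms(3) unfolding x_def by blast
    define w where "w = l1 + e1"
    have wh: "bf G w h = 1" unfolding w_def using l1 e1 by (simp add: bf_add_left)
    have ww: "bf G w w = 2 * x - 4" unfolding w_def sq x_def using l1 e1 by simp
    have "x \<noteq> 2"
    proof
      assume "x = 2"
      then have "isotropic G h 1 w" unfolding isotropic_def using wh ww by simp
      then show False using A unfolding admissible1_def by blast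
    qed
    moreover have "\<not> x \<ge> 3"
    proof
      assume "x \<ge> 3"
      then have "bf G w w \<ge> 2" using ww by simp
      then have "1 * 2 \<le> bf G h h * bf G w w" using hh by (intro mult_mono) auto
      then have "bf G h h * bf G w w \<ge> 2" by simp
      then show False using hodge_int[OF P, of w] wh by simp
    qed
    ultimately have "x = 0 \<or> x = 1" using x0 by linarith
    then show "bf G l1 e1 \<in> {0, 1}" unfolding x_def by auto
  qed
  have part1: "admissible2 G h \<longrightarrow> bf G l1 l2 \<in> {0, 1}"
  proof
    assume A: "admissible2 G h"
    then have h4: "bf G h h \<ge> 4" unfolding admissible2_def by simp
    define x where "x = bf G l1 l2"
    define w where "w = l1 + l2"
    have wh: "bf G w h = 2" unfolding w_def using l1 l2 by (simp add: bf_add_left)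
    have ww: "bf G w w = 2 * x - 4" unfolding w_def sq x_def using l1 l2 by simp
    have "x \<noteq> 2"
    proof
      assume "x = 2"
      then have "isotropic G h 2 w" unfolding isotropic_def using wh ww by simp
      then show False using A unfolding admissible2_def by blast
    qed
    moreover have "\<not> x \<ge> 3"
    proof
      assume "x \<ge> 3"
      then have "bf G w w \<ge> 2" using ww by simp
      then have "4 * 2 \<le> bf G h h * bf G w w" using h4 by (intro mult_mono) auto
      then have "bf G h h * bf G w w \<ge> 8" by simp
      then show False using hodge_int[OF P, of w] wh by simp
    qed
    moreover have lo: "x \<ge> -1"
    proof -
      have d0: "l1 - l2 \<noteq> 0" using assms(8) by simp
      have "bf G (l1 - l2) h = 0" using l1 l2 by (simp add: bf_diff_left)
      then have "bf G (l1 - l2) (l1 - l2) < 0" using negdef_int[OF P] d0 by blast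
      then show ?thesis unfolding x_def sqd using l1 l2 by simp
    qed
    moreover have "x \<noteq> -1"
    proof
      assume x1: "x = -1"
      define d where "d = l1 - l2"
      have "d \<in> root G h 0" unfolding root_def d_def using x1 l1 l2
        by (simp add: x_def bf_diff_left bf_diff_right sym[of l2 l1])
      then have "d \<in> pos_roots G h \<Delta> \<or> - d \<in> pos_roots G h \<Delta>" by (rule pos_or_neg[OF W])
      then show False
      proof
        assume "d \<in> pos_roots G h \<Delta>"
        then have "bf G l1 d \<ge> 0" by (rule lines_pos[OF P W assms(6)])
        moreover have "bf G l1 d = -1" unfolding d_def using l1 x1 by (simp add: bf_diff_right x_def)
        ultimately show False by simp
      next
        assume "- d \<in> pos_roots G h \<Delta>"
        then have "bf G l2 (- d) \<ge> 0" by (rule lines_pos[OF P W assms(7)])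
        moreover have "bf G l2 (- d) = -1" unfolding d_def using l2 x1
          by (simp add: bf_diff_right bf_minus_right x_def sym[of l2 l1])
        ultimately show False by simp
      qed
    qed
    ultimately have "x = 0 \<or> x = 1" by linarith
    then show "bf G l1 l2 \<in> {0, 1}" unfolding x_def by auto
  qed
  show ?thesis using part1 part2 part3 by blast
qed

end
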